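(* For every $\Lambda\in\mathcal{X}_d$, the set $T_\varepsilon(\Lambda)=\{t\in\mathbb{R}^{k+r-1}:a_t\Lambda\in\mathcal{S}_\varepsilon\}$ is discrete.
   Context: Let $k,r\ge1$, positive integers $m_1,\dots,m_k,n_1,\dots,n_r$, $d=\sum m_i+\sum n_j$, with fixed norms $\|\cdot\|$ on each $\mathbb{R}^{m_i},\mathbb{R}^{n_j}$, and $\mathbb{S}^l$ the unit sphere of the norm on $\mathbb{R}^l$. $\mathcal{X}_d$ is the space of unimodular lattices in $\mathbb{R}^d$. For $\varepsilon>0$, $L_\varepsilon=\{(x,y)\in(\mathbb{S}^{m_1}\times\cdots\times\mathbb{S}^{m_k}\times\mathbb{S}^{n_1}\times\cdots\times\mathbb{S}^{n_{r-1}})\times\mathbb{R}^{n_r}:\|y\|^{n_r}\le\varepsilon\}$ and $\mathcal{S}_\varepsilon$ is the set of $\Lambda\in\mathcal{X}_d$ having a primitive vector in $L_\varepsilon$. For $t\in\mathbb{R}^{k+r-1}$, $a_t=\mathrm{diag}\big(e^{t_1}I_{m_1},\dots,e^{t_k}I_{m_k},e^{-t_{k+1}}I_{n_1},\dots,e^{-t_{k+r-1}}I_{n_{r-1}},e^{(\sum_{i=1}^{r-1}n_it_{k+i}-\sum_{i=1}^km_it_i)/n_r}I_{n_r}\big)$. *)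

theory Defs
  imports "HOL-Analysis.Analysis" "HOL-Combinatorics.Permutations"
begin

text \<open>Conventions. A vector of R^l is represented as a function nat => real that
vanishes at every index >= l. Indices start at 0.\<close>

definition vec_in :: "nat \<Rightarrow> (nat \<Rightarrow> real) \<Rightarrow> bool" where
  "vec_in l x \<longleftrightarrow> (\<forall>j\<ge>l. x j = 0)"

definition is_norm_on :: "nat \<Rightarrow> ((nat \<Rightarrow> real) \<Rightarrow> real) \<Rightarrow> bool" where
  "is_norm_on l N \<longleftrightarrow>
     (\<forall>x. vec_in l x \<longrightarrow> N x \<ge> 0 \<and> (N x = 0 \<longleftrightarrow> x = (\<lambda>_. 0))) \<and>
     (\<forall>x c. vec_in l x \<longrightarrow> N (\<lambda>j. c * x j) = \<bar>c\<bar> * N x) \<and>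
     (\<forall>x y. vec_in l x \<longrightarrow> vec_in l y \<longrightarrow> N (\<lambda>j. x j + y j) \<le> N x + N y)"

definition det_n :: "nat \<Rightarrow> (nat \<Rightarrow> nat \<Rightarrow> real) \<Rightarrow> real" where
  "det_n d A = (\<Sum>\<sigma> | \<sigma> permutes {..<d}. of_int (sign \<sigma>) * (\<Prod>i<d. A i (\<sigma> i)))"

definition lattice_of :: "nat \<Rightarrow> (nat \<Rightarrow> nat \<Rightarrow> real) \<Rightarrow> (nat \<Rightarrow> real) set" where
  "lattice_of d b = {(\<lambda>j. \<Sum>i<d. of_int (c i) * b i j) | c :: nat \<Rightarrow> int. True}"

definition unimodular_lattices :: "nat \<Rightarrow> (nat \<Rightarrow> real) set set" where
  "unimodular_lattices d = {lattice_of d b | b. (\<forall>i<d. vec_in d (b i)) \<and> \<bar>det_n d b\<bar> = 1}"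

definition primitive_in :: "(nat \<Rightarrow> real) set \<Rightarrow> (nat \<Rightarrow> real) \<Rightarrow> bool" where
  "primitive_in L v \<longleftrightarrow> v \<in> L \<and> v \<noteq> (\<lambda>_. 0) \<and>
     (\<forall>w\<in>L. \<forall>c::real. w = (\<lambda>j. c * v j) \<longrightarrow> c \<in> \<int>)"

definition bsize :: "nat \<Rightarrow> (nat \<Rightarrow> nat) \<Rightarrow> (nat \<Rightarrow> nat) \<Rightarrow> nat \<Rightarrow> nat" where
  "bsize k m n i = (if i < k then m i else n (i - k))"

definition boff :: "nat \<Rightarrow> (nat \<Rightarrow> nat) \<Rightarrow> (nat \<Rightarrow> nat) \<Rightarrow> nat \<Rightarrow> nat" where
  "boff k m n i = (\<Sum>l<i. bsize k m n l)"

definition total_dim :: "nat \<Rightarrow> nat \<Rightarrow> (nat \<Rightarrow> nat) \<Rightarrow> (nat \<Rightarrow> nat) \<Rightarrow> nat" where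
  "total_dim k r m n = (\<Sum>i<k. m i) + (\<Sum>j<r. n j)"

definition blockv :: "nat \<Rightarrow> (nat \<Rightarrow> nat) \<Rightarrow> (nat \<Rightarrow> nat) \<Rightarrow> nat \<Rightarrow> (nat \<Rightarrow> real) \<Rightarrow> (nat \<Rightarrow> real)" where
  "blockv k m n i x = (\<lambda>j. if j < bsize k m n i then x (boff k m n i + j) else 0)"

text \<open>L_epsilon. Nm i is the norm on the i-th block (first the R^(m_i), then the R^(n_j)).\<close>
definition L_eps :: "nat \<Rightarrow> nat \<Rightarrow> (nat \<Rightarrow> nat) \<Rightarrow> (nat \<Rightarrow> nat) \<Rightarrow>
    (nat \<Rightarrow> (nat \<Rightarrow> real) \<Rightarrow> real) \<Rightarrow> real \<Rightarrow> (nat \<Rightarrow> real) set" where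
  "L_eps k r m n Nm \<epsilon> = {x. vec_in (total_dim k r m n) x \<and>
      (\<forall>i < k + r - 1. Nm i (blockv k m n i x) = 1) \<and>
      Nm (k + r - 1) (blockv k m n (k + r - 1) x) ^ n (r - 1) \<le> \<epsilon>}"

definition S_eps :: "nat \<Rightarrow> nat \<Rightarrow> (nat \<Rightarrow> nat) \<Rightarrow> (nat \<Rightarrow> nat) \<Rightarrow>
    (nat \<Rightarrow> (nat \<Rightarrow> real) \<Rightarrow> real) \<Rightarrow> real \<Rightarrow> (nat \<Rightarrow> real) set set" where
  "S_eps k r m n Nm \<epsilon> = {L \<in> unimodular_lattices (total_dim k r m n).
      \<exists>v. primitive_in L v \<and> v \<in> L_eps k r m n Nm \<epsilon>}"

text \<open>Scaling factor of a_t on block i; t is indexed by 0..k+r-2.\<close>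
definition afactor :: "nat \<Rightarrow> nat \<Rightarrow> (nat \<Rightarrow> nat) \<Rightarrow> (nat \<Rightarrow> nat) \<Rightarrow> (nat \<Rightarrow> real) \<Rightarrow> nat \<Rightarrow> real" where
  "afactor k r m n t i =
     (if i < k then exp (t i)
      else if i < k + r - 1 then exp (- t i)
      else exp (((\<Sum>l<r - 1. real (n l) * t (k + l)) - (\<Sum>l<k. real (m l) * t l)) / real (n (r - 1))))"

definition a_act :: "nat \<Rightarrow> nat \<Rightarrow> (nat \<Rightarrow> nat) \<Rightarrow> (nat \<Rightarrow> nat) \<Rightarrow> (nat \<Rightarrow> real) \<Rightarrow>
    (nat \<Rightarrow> real) \<Rightarrow> (nat \<Rightarrow> real)" where
  "a_act k r m n t x = (\<lambda>j. (\<Sum>i < k + r.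
      if boff k m n i \<le> j \<and> j < boff k m n (Suc i) then afactor k r m n t i else 0) * x j)"

definition T_eps :: "nat \<Rightarrow> nat \<Rightarrow> (nat \<Rightarrow> nat) \<Rightarrow> (nat \<Rightarrow> nat) \<Rightarrow>
    (nat \<Rightarrow> (nat \<Rightarrow> real) \<Rightarrow> real) \<Rightarrow> real \<Rightarrow> (nat \<Rightarrow> real) set \<Rightarrow> (nat \<Rightarrow> real) set" where
  "T_eps k r m n Nm \<epsilon> \<Lambda> = {t. vec_in (k + r - 1) t \<and>
      a_act k r m n t ` \<Lambda> \<in> S_eps k r m n Nm \<epsilon>}"

end

theory Submission
  imports Defs "Jordan_Normal_Form.Determinant"
begin


lemma inverse_exists:
  fixes b :: "nat \<Rightarrow> nat \<Rightarrow> real"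
  assumes "det_n d b \<noteq> 0"
  shows "\<exists>M. \<forall>i<d. \<forall>i'<d. (\<Sum>j<d. M i j * b i' j) = (if i = i' then 1 else 0)"
proof -
  define B where "B = mat d d (\<lambda>(i,j). b i j)"
  have Bc: "B \<in> carrier_mat d d" unfolding B_def by simp
  have "det B = det_n d b"
    unfolding det_def det_n_def B_def
    by (auto simp: atLeast0LessThan intro!: sum.cong prod.cong dest: permutes_in_image) 
  then have "det B \<noteq> 0" using assms by simp
  from det_non_zero_imp_unit[OF Bc this, of "()"]
  obtain B' where B': "B' \<in> carrier_mat d d" "B * B' = 1\<^sub>m d"
    unfolding Units_def ring_mat_def by auto
  show ?thesis
  proof (intro exI allI impI)
    fix i i' assume i: "i < d" and i': "i' < d"
    have "(B * B') $$ (i', i) = (\<Sum>j<d. b i' j * B' $$ (j, i))"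
      using B'(1) i i' by (simp add: index_mult_mat B_def scalar_prod_def atLeast0LessThan)
    moreover have "(B * B') $$ (i', i) = (if i = i' then 1 else 0)"
      using B' i i' by auto
    ultimately show "(\<Sum>j<d. B' $$ (j, i) * b i' j) = (if i = i' then 1 else 0)"
      by (simp add: mult.commute)
  qed
qed

lemma lattice_box_finite:
  fixes b :: "nat \<Rightarrow> nat \<Rightarrow> real"
  assumes "det_n d b \<noteq> 0"
  shows "finite (lattice_of d b \<inter> {x. \<forall>j<d. \<bar>x j\<bar> \<le> R})"
proof -
  obtain M where M: "\<And>i i'. i<d \<Longrightarrow> i'<d \<Longrightarrow> (\<Sum>j<d. M i j * b i' j) = (if i = i' then 1 else 0)"
    using inverse_exists[OF assms] by blast
  define Q where "Q = (\<Sum>i<d. \<Sum>j<d. \<bar>M i j\<bar>) * \<bar>R\<bar>"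
  define Z where "Z = \<lceil>Q\<rceil>"
  define L where "L = (\<lambda>c::nat\<Rightarrow>int. (\<lambda>j. \<Sum>i<d. of_int (c i) * b i j))"
  have "lattice_of d b \<inter> {x. \<forall>j<d. \<bar>x j\<bar> \<le> R} \<subseteq> L ` (PiE {..<d} (\<lambda>_. {-Z..Z}))"
  proof
    fix x assume x: "x \<in> lattice_of d b \<inter> {x. \<forall>j<d. \<bar>x j\<bar> \<le> R}"
    then obtain c where xc: "x = L c" unfolding lattice_of_def L_def by auto
    have xb: "\<bar>x j\<bar> \<le> \<bar>R\<bar>" if "j < d" for j using x that by force
    define c' where "c' = restrict c {..<d}"
    have "L c' = L c" unfolding L_def c'_def by (intro ext sum.cong) auto
    moreover have "c' \<in> PiE {..<d} (\<lambda>_. {-Z..Z})"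
    proof -
      have "c i \<in> {-Z..Z}" if i: "i < d" for i
      proof -
        have "(\<Sum>j<d. M i j * x j) = (\<Sum>j<d. \<Sum>i'<d. of_int (c i') * (M i j * b i' j))"
          unfolding xc L_def by (simp add: sum_distrib_left algebra_simps)
        also have "\<dots> = (\<Sum>i'<d. of_int (c i') * (\<Sum>j<d. M i j * b i' j))"
          by (subst sum.swap) (simp add: sum_distrib_left)
        also have "\<dots> = (\<Sum>i'<d. of_int (c i') * (if i = i' then 1 else 0))"
          using M i by simp
        also have "\<dots> = of_int (c i)" using i by (simp add: if_distrib cong: if_cong)
        finally have ci: "of_int (c i) = (\<Sum>j<d. M i j * x j)" ..
        have "\<bar>(\<Sum>j<d. M i j * x j)\<bar> \<le> (\<Sum>j<d. \<bar>M i j\<bar> * \<bar>R\<bar>)"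
          by (rule order_trans[OF sum_abs]) (auto simp: abs_mult intro!: sum_mono mult_left_mono xb)
        also have "\<dots> = (\<Sum>j<d. \<bar>M i j\<bar>) * \<bar>R\<bar>" by (simp add: sum_distrib_right)
        also have "\<dots> \<le> Q" unfolding Q_def
          by (intro mult_right_mono member_le_sum[where f="\<lambda>i. \<Sum>j<d. \<bar>M i j\<bar>"]) (use i in auto)
        finally have "\<bar>real_of_int (c i)\<bar> \<le> Q" using ci by simp
        then have "\<bar>real_of_int (c i)\<bar> \<le> real_of_int Z" unfolding Z_def
          using le_of_int_ceiling order_trans by blast
        then show ?thesis by (simp add: abs_le_iff)
      qed
      then show ?thesis unfolding c'_def by auto
    qed
    ultimately show "x \<in> L ` (PiE {..<d} (\<lambda>_. {-Z..Z}))" using xc by (metis image_eqI)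
  qed
  moreover have "finite (L ` (PiE {..<d} (\<lambda>_. {-Z..Z})))"
    by (intro finite_imageI finite_PiE) auto
  ultimately show ?thesis by (rule finite_subset)
qed



lemma vec_in_sum: "finite S \<Longrightarrow> (\<forall>j\<in>S. vec_in l (f j)) \<Longrightarrow> vec_in l (\<lambda>i. \<Sum>j\<in>S. f j i)"
  unfolding vec_in_def by auto

lemma norm_zero: "is_norm_on l N \<Longrightarrow> N (\<lambda>_. 0) = 0"
  unfolding is_norm_on_def vec_in_def by auto

lemma norm_sum:
  assumes N: "is_norm_on l N" and S: "finite S"
  shows "(\<forall>j\<in>S. vec_in l (f j)) \<longrightarrow> N (\<lambda>i. \<Sum>j\<in>S. f j i) \<le> (\<Sum>j\<in>S. N (f j))"
  using S
proof (induction S rule: finite_induct)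
  case empty
  then show ?case using norm_zero[OF N] by simp
next
  case (insert a S)
  show ?case
  proof
    assume h: "\<forall>j\<in>insert a S. vec_in l (f j)"
    have "N (\<lambda>i. \<Sum>j\<in>insert a S. f j i) = N (\<lambda>i. f a i + (\<Sum>j\<in>S. f j i))"
      using insert by simp
    also have "\<dots> \<le> N (f a) + N (\<lambda>i. \<Sum>j\<in>S. f j i)"
      using N h vec_in_sum[of S l f] insert(1) unfolding is_norm_on_def by auto
    also have "\<dots> \<le> N (f a) + (\<Sum>j\<in>S. N (f j))" using insert h by auto
    finally show "N (\<lambda>i. \<Sum>j\<in>insert a S. f j i) \<le> (\<Sum>j\<in>insert a S. N (f j))"
      using insert by simp
  qed
qed

lemma norm_upper:
  assumes N: "is_norm_on l N" and x: "vec_in l x"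
  shows "N x \<le> (\<Sum>j<l. \<bar>x j\<bar> * N (\<lambda>i. if i = j then 1 else 0))"
proof -
  let ?e = "\<lambda>j. (\<lambda>i. if i = j then 1 else (0::real))"
  have ev: "vec_in l (?e j)" if "j < l" for j using that unfolding vec_in_def by auto
  have "x = (\<lambda>i. \<Sum>j<l. x j * ?e j i)"
    using x unfolding vec_in_def by (auto simp: if_distrib cong: if_cong)
  then have "N x = N (\<lambda>i. \<Sum>j<l. (\<lambda>i. x j * ?e j i) i)" by simp
  also have "\<dots> \<le> (\<Sum>j<l. N (\<lambda>i. x j * ?e j i))"
    using norm_sum[OF N, of "{..<l}" "\<lambda>j i. x j * ?e j i"] ev unfolding vec_in_def by auto
  also have "\<dots> = (\<Sum>j<l. \<bar>x j\<bar> * N (?e j))"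
    using N ev unfolding is_norm_on_def by (intro sum.cong) auto
  finally show ?thesis .
qed

lemma norm_lip:
  assumes N: "is_norm_on l N" and x: "vec_in l x" and y: "vec_in l y"
  shows "\<bar>N x - N y\<bar> \<le> (\<Sum>j<l. \<bar>x j - y j\<bar> * N (\<lambda>i. if i = j then 1 else 0))"
proof -
  have d1: "vec_in l (\<lambda>j. x j - y j)" "vec_in l (\<lambda>j. y j - x j)" using x y unfolding vec_in_def by auto
  have "N x = N (\<lambda>j. (x j - y j) + y j)" by simp
  also have "\<dots> \<le> N (\<lambda>j. x j - y j) + N y" using N d1 y unfolding is_norm_on_def by blast
  finally have 1: "N x - N y \<le> N (\<lambda>j. x j - y j)" by simp
  have "N y = N (\<lambda>j. (y j - x j) + x j)" by simp
  also have "\<dots> \<le> N (\<lambda>j. y j - x j) + N x" using N d1 x unfolding is_norm_on_def by blast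
  also have "N (\<lambda>j. y j - x j) = N (\<lambda>j. x j - y j)"
  proof -
    have "N (\<lambda>j. (-1) * (x j - y j)) = \<bar>-1\<bar> * N (\<lambda>j. x j - y j)"
      using N d1(1) unfolding is_norm_on_def by blast
    moreover have "(\<lambda>j. (-1) * (x j - y j)) = (\<lambda>j. y j - x j)" by auto
    ultimately show ?thesis by simp
  qed
  finally have 2: "N y - N x \<le> N (\<lambda>j. x j - y j)" by simp
  have "\<bar>N x - N y\<bar> \<le> N (\<lambda>j. x j - y j)" using 1 2 by linarith
  also have "\<dots> \<le> (\<Sum>j<l. \<bar>x j - y j\<bar> * N (\<lambda>i. if i = j then 1 else 0))"
    using norm_upper[OF N d1(1)] by simp
  finally show ?thesis .
qed

lemma norm_lower:
  assumes N: "is_norm_on l N"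
  shows "\<exists>c>0. \<forall>x. vec_in l x \<longrightarrow> c * (\<Sum>j<l. \<bar>x j\<bar>) \<le> N x"
proof (cases "l = 0")
  case True
  then show ?thesis using N unfolding is_norm_on_def by (intro exI[of _ 1]) auto
next
  case False
  let ?e = "\<lambda>j. (\<lambda>i. if i = j then 1 else (0::real))"
  define K where "K = (\<Inter>j\<in>{l..}. {x::nat\<Rightarrow>real. x j = 0}) \<inter> {x. (\<Sum>j<l. \<bar>x j\<bar>) = 1}"
  have Kv: "x \<in> K \<longleftrightarrow> vec_in l x \<and> (\<Sum>j<l. \<bar>x j\<bar>) = 1" for x
    unfolding K_def vec_in_def by auto
  have coord: "continuous_on UNIV (\<lambda>x::nat\<Rightarrow>real. x j)" for j by simp
  have "closed K" unfolding K_def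
  proof (intro closed_Int closed_INT ballI)
    show "closed {x::nat\<Rightarrow>real. x j = 0}" for j
      using closed_Collect_eq[OF coord[of j] continuous_on_const[of UNIV 0]] by simp
    show "closed {x::nat\<Rightarrow>real. (\<Sum>j<l. \<bar>x j\<bar>) = 1}"
      by (intro closed_Collect_eq continuous_intros) (simp_all add: coord)
  qed
  define P where "P = PiE UNIV (\<lambda>i. if i < l then cbox (-1) (1::real) else {0})"
  have "compactin (product_topology (\<lambda>i. euclidean) UNIV) P"
    unfolding P_def by (subst compactin_PiE) auto
  then have "compact P" by (simp add: euclidean_product_topology)
  have KP: "K \<subseteq> P"
  proof
    fix x assume "x \<in> K"
    then have v: "vec_in l x" and s: "(\<Sum>j<l. \<bar>x j\<bar>) = 1" using Kv by auto
    have "\<bar>x i\<bar> \<le> 1" if "i < l" for i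
      using member_le_sum[of i "{..<l}" "\<lambda>j. \<bar>x j\<bar>"] that s by auto
    then show "x \<in> P" using v unfolding P_def vec_in_def by (auto simp: abs_le_iff)
  qed
  have "compact K"
    using compact_Int_closed[OF \<open>compact P\<close> \<open>closed K\<close>] KP by (simp add: Int_absorb1)
  have "K \<noteq> {}" using False Kv[of "?e 0"] unfolding vec_in_def by auto
  have "continuous_on K N"
    unfolding continuous_on_def
  proof
    fix x assume "x \<in> K"
    then have xv: "vec_in l x" using Kv by auto
    have "((\<lambda>y. (\<Sum>j<l. \<bar>y j - x j\<bar> * N (?e j))) \<longlongrightarrow> (\<Sum>j<l. \<bar>x j - x j\<bar> * N (?e j))) (at x within K)"
      by (intro tendsto_intros continuous_on_tendsto_compose[OF coord])
         (auto intro: tendsto_ident_at)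
    then have t0: "((\<lambda>y. (\<Sum>j<l. \<bar>y j - x j\<bar> * N (?e j))) \<longlongrightarrow> 0) (at x within K)" by simp
    have "((\<lambda>y. N y - N x) \<longlongrightarrow> 0) (at x within K)"
    proof (rule tendsto_0_le[OF t0, of _ 1])
      show "\<forall>\<^sub>F y in at x within K. norm (N y - N x) \<le> norm (\<Sum>j<l. \<bar>y j - x j\<bar> * N (?e j)) * 1"
        unfolding eventually_at_filter
      proof (intro always_eventually allI impI)
        fix y assume "y \<noteq> x" "y \<in> K"
        then have yv: "vec_in l y" using Kv by auto
        have "norm (N y - N x) \<le> (\<Sum>j<l. \<bar>y j - x j\<bar> * N (?e j))"
          using norm_lip[OF N yv xv] by simp
        also have "\<dots> \<le> norm (\<Sum>j<l. \<bar>y j - x j\<bar> * N (?e j))" by simp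
        finally show "norm (N y - N x) \<le> norm (\<Sum>j<l. \<bar>y j - x j\<bar> * N (?e j)) * 1" by simp
      qed
    qed
    then show "(N \<longlongrightarrow> N x) (at x within K)" by (rule LIM_zero_cancel)
  qed
  from continuous_attains_inf[OF \<open>compact K\<close> \<open>K \<noteq> {}\<close> this]
  obtain x0 where x0: "x0 \<in> K" "\<And>y. y \<in> K \<Longrightarrow> N x0 \<le> N y" by blast
  have x0v: "vec_in l x0" "(\<Sum>j<l. \<bar>x0 j\<bar>) = 1" using x0 Kv by auto
  have "x0 \<noteq> (\<lambda>_. 0)" using x0v by auto
  then have pos: "N x0 > 0" using N x0v unfolding is_norm_on_def by (metis order_le_less)
  show ?thesis
  proof (intro exI[of _ "N x0"] conjI allI impI pos)
    fix x assume xv: "vec_in l x"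
    define s where "s = (\<Sum>j<l. \<bar>x j\<bar>)"
    have s0: "s \<ge> 0" unfolding s_def by (simp add: sum_nonneg)
    show "N x0 * (\<Sum>j<l. \<bar>x j\<bar>) \<le> N x"
    proof (cases "s = 0")
      case True
      then show ?thesis using N xv unfolding s_def is_norm_on_def by auto
    next
      case False
      then have sp: "s > 0" using s0 by auto
      define y where "y = (\<lambda>j. (1/s) * x j)"
      have yv: "vec_in l y" using xv unfolding y_def vec_in_def by auto
      have "(\<Sum>j<l. \<bar>y j\<bar>) = (1/s) * s" unfolding y_def s_def using sp
        by (simp add: abs_mult sum_distrib_left)
      then have "y \<in> K" using Kv yv sp by auto
      then have "N x0 \<le> N y" by (rule x0)
      also have "N y = \<bar>1/s\<bar> * N x" using N xv unfolding y_def is_norm_on_def by blast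
      also have "\<dots> = (1/s) * N x" using sp by simp
      finally have "N x0 * s \<le> N x" using sp by (simp add: field_simps)
      then show ?thesis unfolding s_def .
    qed
  qed
qed



lemma boff_Suc: "boff k m n (Suc i) = boff k m n i + bsize k m n i"
  unfolding boff_def by simp

lemma boff_mono: "i \<le> i' \<Longrightarrow> boff k m n i \<le> boff k m n i'"
  unfolding boff_def by (rule sum_mono2) auto

lemma boff_total: "boff k m n (k + r) = total_dim k r m n"
proof (induction r)
  case 0
  then show ?case unfolding boff_def total_dim_def bsize_def by simp
next
  case (Suc r)
  then show ?case unfolding total_dim_def
    by (simp add: boff_Suc bsize_def)
qed

lemma block_find: "j < boff k m n N \<Longrightarrow> \<exists>i<N. boff k m n i \<le> j \<and> j < boff k m n (Suc i)"
proof (induction N)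
  case 0
  then show ?case unfolding boff_def by simp
next
  case (Suc N)
  show ?case
  proof (cases "j < boff k m n N")
    case True
    then show ?thesis using Suc.IH by (meson less_SucI)
  next
    case False
    then show ?thesis using Suc.prems by (intro exI[of _ N]) auto
  qed
qed

lemma a_act_block:
  assumes i: "i < k + r" and j: "j < bsize k m n i"
  shows "a_act k r m n t x (boff k m n i + j) = afactor k r m n t i * x (boff k m n i + j)"
proof -
  have c: "(boff k m n i' \<le> boff k m n i + j \<and> boff k m n i + j < boff k m n (Suc i')) \<longleftrightarrow> i' = i" for i'
  proof (cases i' i rule: linorder_cases)
    case less
    then have "boff k m n (Suc i') \<le> boff k m n i" by (intro boff_mono) auto
    then show ?thesis using less by auto
  next
    case greater
    then have "boff k m n (Suc i) \<le> boff k m n i'" by (intro boff_mono) auto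
    then show ?thesis using greater j by (auto simp: boff_Suc)
  next
    case equal
    then show ?thesis using j by (auto simp: boff_Suc)
  qed
  have "(\<Sum>i'<k + r. if boff k m n i' \<le> boff k m n i + j \<and> boff k m n i + j < boff k m n (Suc i')
          then afactor k r m n t i' else 0) = (\<Sum>i'<k + r. if i' = i then afactor k r m n t i' else 0)"
    using c by (intro sum.cong) auto
  also have "\<dots> = afactor k r m n t i" using i by simp
  finally show ?thesis unfolding a_act_def by simp
qed

lemma blockv_a_act:
  assumes i: "i < k + r"
  shows "blockv k m n i (a_act k r m n t x) = (\<lambda>j. afactor k r m n t i * blockv k m n i x j)"
  unfolding blockv_def using a_act_block[OF i] by auto

lemma vec_in_blockv: "vec_in (bsize k m n i) (blockv k m n i x)"
  unfolding vec_in_def blockv_def by auto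

lemma afactor_pos: "afactor k r m n t i > 0"
  unfolding afactor_def by auto

lemma norm_blockv_a_act:
  assumes i: "i < k + r" and N: "is_norm_on (bsize k m n i) Nm"
  shows "Nm (blockv k m n i (a_act k r m n t x)) = afactor k r m n t i * Nm (blockv k m n i x)"
proof -
  have "Nm (blockv k m n i (a_act k r m n t x)) = \<bar>afactor k r m n t i\<bar> * Nm (blockv k m n i x)"
    using N vec_in_blockv[of k m n i x] unfolding blockv_a_act[OF i] is_norm_on_def by blast
  then show ?thesis using afactor_pos[of k r m n t i] by simp
qed



lemma coord_bound:
  assumes cl: "\<forall>i<k+r. \<forall>x. vec_in (bsize k m n i) x \<longrightarrow> c i * (\<Sum>j<bsize k m n i. \<bar>x j\<bar>) \<le> Nm i x"
    and cp: "\<forall>i<k+r. c i > 0"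
    and R: "\<forall>i<k+r. Nm i (blockv k m n i v) \<le> R"
    and j: "j < total_dim k r m n"
  shows "\<bar>v j\<bar> \<le> R * (\<Sum>i<k+r. 1 / c i)"
proof -
  from j have "j < boff k m n (k + r)" by (simp add: boff_total)
  from block_find[OF this] obtain i where i: "i < k + r" "boff k m n i \<le> j" "j < boff k m n (Suc i)"
    by blast
  define j' where "j' = j - boff k m n i"
  have j': "j' < bsize k m n i" "j = boff k m n i + j'" using i unfolding j'_def by (auto simp: boff_Suc)
  have "v j = blockv k m n i v j'" unfolding blockv_def using j' by simp
  then have "\<bar>v j\<bar> \<le> (\<Sum>j<bsize k m n i. \<bar>blockv k m n i v j\<bar>)"
    using member_le_sum[of j' "{..<bsize k m n i}" "\<lambda>j. \<bar>blockv k m n i v j\<bar>"] j' by auto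
  moreover have "c i * (\<Sum>j<bsize k m n i. \<bar>blockv k m n i v j\<bar>) \<le> R"
    using cl i(1) vec_in_blockv[of k m n i v] R by (meson order_trans)
  ultimately have "c i * \<bar>v j\<bar> \<le> R" using cp i(1)
    by (meson mult_left_mono less_imp_le order_trans)
  then have 1: "\<bar>v j\<bar> \<le> R * (1 / c i)" using cp i(1) by (simp add: field_simps)
  have R0: "R \<ge> 0" using \<open>c i * \<bar>v j\<bar> \<le> R\<close> cp i(1) by (smt (verit) mult_nonneg_nonneg abs_ge_zero)
  have "1 / c i \<le> (\<Sum>i<k+r. 1 / c i)"
    by (rule member_le_sum) (use i cp in auto)
  then have "R * (1 / c i) \<le> R * (\<Sum>i<k+r. 1 / c i)" using R0 by (rule mult_left_mono)
  then show ?thesis using 1 by linarith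
qed



theorem lemma5p1:
  fixes k r :: nat and m n :: "nat \<Rightarrow> nat"
    and Nm :: "nat \<Rightarrow> (nat \<Rightarrow> real) \<Rightarrow> real"
    and \<epsilon> :: real and \<Lambda> :: "(nat \<Rightarrow> real) set"
  assumes "k \<ge> 1" and "r \<ge> 1"
    and "\<forall>i<k. m i \<ge> 1" and "\<forall>j<r. n j \<ge> 1"
    and "\<forall>i<k + r. is_norm_on (bsize k m n i) (Nm i)"
    and "\<epsilon> > 0"
    and "\<Lambda> \<in> unimodular_lattices (total_dim k r m n)"
  shows "discrete (T_eps k r m n Nm \<epsilon> \<Lambda>)"
proof -
  define d where "d = total_dim k r m n"
  define K' where "K' = k + r - 1"
  have kr: "k + r = Suc K'" "k \<le> K'" using assms(1,2) K'_def by auto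
  from assms(7) obtain b where Lb: "\<Lambda> = lattice_of d b" and db: "\<bar>det_n d b\<bar> = 1"
    unfolding unimodular_lattices_def d_def by auto
  have "\<forall>i. \<exists>ci>0. i < k+r \<longrightarrow> (\<forall>x. vec_in (bsize k m n i) x \<longrightarrow> ci * (\<Sum>j<bsize k m n i. \<bar>x j\<bar>) \<le> Nm i x)"
  proof
    fix i
    show "\<exists>ci>0. i < k+r \<longrightarrow> (\<forall>x. vec_in (bsize k m n i) x \<longrightarrow> ci * (\<Sum>j<bsize k m n i. \<bar>x j\<bar>) \<le> Nm i x)"
    proof (cases "i < k + r")
      case True
      then show ?thesis using norm_lower[of "bsize k m n i" "Nm i"] assms(5) by blast
    next
      case False
      then show ?thesis by (intro exI[of _ 1]) auto
    qed
  qed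
  then obtain c where c: "\<And>i. c i > 0"
    "\<And>i. i < k+r \<Longrightarrow> (\<forall>x. vec_in (bsize k m n i) x \<longrightarrow> c i * (\<Sum>j<bsize k m n i. \<bar>x j\<bar>) \<le> Nm i x)"
    by metis
  define Cinv where "Cinv = (\<Sum>i<k+r. 1 / c i)"
  let ?T = "T_eps k r m n Nm \<epsilon> \<Lambda>"
  show ?thesis unfolding discrete_def
  proof
    fix t0 assume t0: "t0 \<in> ?T"
    define A where "A = (\<Sum>i<K'. \<bar>t0 i\<bar>) + 1"
    define A2 where "A2 = ((\<Sum>l<r-1. real (n l)) + (\<Sum>l<k. real (m l))) * A"
    define R where "R = max (exp A) (max 1 \<epsilon> * exp A2)"
    define U where "U = {t::nat\<Rightarrow>real. \<forall>i\<in>{..<K'}. t (id i) \<in> ball (t0 i) 1}"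
    have Uopen: "open U" unfolding U_def by (rule product_topology_basis') auto
    have t0U: "t0 \<in> U" unfolding U_def by auto
    define \<phi> where "\<phi> = (\<lambda>v::nat\<Rightarrow>real. \<lambda>i. if i < k then - ln (Nm i (blockv k m n i v))
       else if i < K' then ln (Nm i (blockv k m n i v)) else 0)"
    have sub: "U \<inter> ?T \<subseteq> \<phi> ` (lattice_of d b \<inter> {x. \<forall>j<d. \<bar>x j\<bar> \<le> R * Cinv})"
    proof
      fix t assume tUT: "t \<in> U \<inter> ?T"
      then have tv: "vec_in K' t" and tS: "a_act k r m n t ` \<Lambda> \<in> S_eps k r m n Nm \<epsilon>"
        unfolding T_eps_def K'_def by auto
      from tS obtain w where wp: "primitive_in (a_act k r m n t ` \<Lambda>) w"
        and wL: "w \<in> L_eps k r m n Nm \<epsilon>" unfolding S_eps_def by auto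
      from wp obtain v where v: "v \<in> \<Lambda>" "w = a_act k r m n t v" unfolding primitive_in_def by auto
      have tA: "\<bar>t i\<bar> \<le> A" if "i < K'" for i
      proof -
        have "dist (t0 i) (t i) < 1" using tUT that unfolding U_def by auto
        then have "\<bar>t i - t0 i\<bar> < 1" by (simp add: dist_real_def abs_minus_commute)
        moreover have "\<bar>t0 i\<bar> \<le> (\<Sum>i<K'. \<bar>t0 i\<bar>)" by (rule member_le_sum) (use that in auto)
        ultimately show ?thesis unfolding A_def by linarith
      qed
      have Nw: "Nm i (blockv k m n i w) = afactor k r m n t i * Nm i (blockv k m n i v)" if "i < k+r" for i
        using norm_blockv_a_act[OF that] assms(5) that v(2) by blast
      have w1: "Nm i (blockv k m n i w) = 1" if "i < K'" for i
        using wL that unfolding L_eps_def K'_def by auto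
      have wlast: "Nm K' (blockv k m n K' w) ^ n (r-1) \<le> \<epsilon>"
        using wL unfolding L_eps_def K'_def by auto
      have Nv_early: "Nm i (blockv k m n i v) = exp (if i < k then - t i else t i)" if i: "i < K'" for i
      proof (cases "i < k")
        case True
        have "exp (t i) * Nm i (blockv k m n i v) = 1"
          using Nw[of i] w1[OF i] True kr unfolding afactor_def by simp
        then show ?thesis using True by (simp add: exp_minus field_simps)
      next
        case False
        have "exp (- t i) * Nm i (blockv k m n i v) = 1"
          using Nw[of i] w1[OF i] False i kr unfolding afactor_def K'_def by simp
        then show ?thesis using False by (simp add: exp_minus field_simps)
      qed
      have tphi: "t = \<phi> v"
      proof
        fix i
        show "t i = \<phi> v i"
        proof (cases "i < K'")
          case True
          then show ?thesis using Nv_early[OF True] unfolding \<phi>_def by auto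
        next
          case False
          then show ?thesis using tv kr unfolding \<phi>_def vec_in_def by auto
        qed
      qed
      have NR: "Nm i (blockv k m n i v) \<le> R" if i: "i < k + r" for i
      proof (cases "i < K'")
        case True
        have "(if i < k then - t i else t i) \<le> A" using tA[OF True] by auto
        then have "Nm i (blockv k m n i v) \<le> exp A" using Nv_early[OF True] by simp
        then show ?thesis unfolding R_def by linarith
      next
        case False
        then have iK: "i = K'" using i kr by auto
        define y where "y = Nm K' (blockv k m n K' w)"
        have "is_norm_on (bsize k m n K') (Nm K')" using assms(5) kr by auto
        then have y0: "y \<ge> 0" using vec_in_blockv[of k m n K' w] unfolding y_def is_norm_on_def by blast
        have ye: "y \<le> max 1 \<epsilon>"
        proof (cases "y \<le> 1")
          case True then show ?thesis by simp
        next
          case False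
          have "y ^ 1 \<le> y ^ n (r-1)" using False assms(2,4)
            by (intro power_increasing) auto
          then show ?thesis using wlast unfolding y_def by simp
        qed
        define E where "E = ((\<Sum>l<r - 1. real (n l) * t (k + l)) - (\<Sum>l<k. real (m l) * t l)) / real (n (r - 1))"
        have af: "afactor k r m n t K' = exp E" unfolding afactor_def E_def using kr K'_def by auto
        have b1: "\<bar>\<Sum>l<r - 1. real (n l) * t (k + l)\<bar> \<le> (\<Sum>l<r-1. real (n l)) * A"
        proof -
          have "\<bar>\<Sum>l<r - 1. real (n l) * t (k + l)\<bar> \<le> (\<Sum>l<r - 1. \<bar>real (n l) * t (k + l)\<bar>)"
            by (rule sum_abs)
          also have "\<dots> \<le> (\<Sum>l<r - 1. real (n l) * A)"
          proof (rule sum_mono)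
            fix l assume "l \<in> {..<r - 1}"
            then have "k + l < K'" unfolding K'_def by auto
            then have "\<bar>t (k + l)\<bar> \<le> A" by (rule tA)
            then show "\<bar>real (n l) * t (k + l)\<bar> \<le> real (n l) * A"
              by (simp add: abs_mult mult_left_mono)
          qed
          also have "\<dots> = (\<Sum>l<r-1. real (n l)) * A" by (simp add: sum_distrib_right)
          finally show ?thesis .
        qed
        have b2: "\<bar>\<Sum>l<k. real (m l) * t l\<bar> \<le> (\<Sum>l<k. real (m l)) * A"
        proof -
          have "\<bar>\<Sum>l<k. real (m l) * t l\<bar> \<le> (\<Sum>l<k. \<bar>real (m l) * t l\<bar>)"
            by (rule sum_abs)
          also have "\<dots> \<le> (\<Sum>l<k. real (m l) * A)"
          proof (rule sum_mono)
            fix l assume "l \<in> {..<k}"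
            then have "l < K'" using kr by auto
            then have "\<bar>t l\<bar> \<le> A" by (rule tA)
            then show "\<bar>real (m l) * t l\<bar> \<le> real (m l) * A"
              by (simp add: abs_mult mult_left_mono)
          qed
          also have "\<dots> = (\<Sum>l<k. real (m l)) * A" by (simp add: sum_distrib_right)
          finally show ?thesis .
        qed
        have nr: "real (n (r - 1)) \<ge> 1" using assms(2,4) by auto
        have "\<bar>E\<bar> \<le> \<bar>(\<Sum>l<r - 1. real (n l) * t (k + l)) - (\<Sum>l<k. real (m l) * t l)\<bar>"
        proof -
          have "\<bar>E\<bar> = \<bar>(\<Sum>l<r - 1. real (n l) * t (k + l)) - (\<Sum>l<k. real (m l) * t l)\<bar> / real (n (r - 1))"
            unfolding E_def abs_divide by (simp only: abs_of_nat)
          also have "\<dots> \<le> \<bar>(\<Sum>l<r - 1. real (n l) * t (k + l)) - (\<Sum>l<k. real (m l) * t l)\<bar>"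
            using nr by (simp add: divide_le_eq mult_le_cancel_left1)
          finally show ?thesis .
        qed
        also have "\<dots> \<le> A2"
          using b1 b2 abs_triangle_ineq4[of "\<Sum>l<r - 1. real (n l) * t (k + l)" "\<Sum>l<k. real (m l) * t l"]
          unfolding A2_def distrib_right by linarith
        finally have EA: "\<bar>E\<bar> \<le> A2" .
        have "y = exp E * Nm K' (blockv k m n K' v)" unfolding y_def using Nw[of K'] kr af by simp
        then have "Nm K' (blockv k m n K' v) = y * exp (- E)" by (simp add: exp_minus field_simps)
        also have "\<dots> \<le> max 1 \<epsilon> * exp A2"
          using ye y0 EA by (intro mult_mono) auto
        finally have "Nm K' (blockv k m n K' v) \<le> max 1 \<epsilon> * exp A2" .
        then show ?thesis unfolding R_def using iK by simp
      qed
      have cl: "\<forall>i<k+r. \<forall>x. vec_in (bsize k m n i) x \<longrightarrow> c i * (\<Sum>j<bsize k m n i. \<bar>x j\<bar>) \<le> Nm i x"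
        using c(2) by blast
      have cp: "\<forall>i<k+r. c i > 0" using c(1) by blast
      have NR': "\<forall>i<k+r. Nm i (blockv k m n i v) \<le> R" using NR by blast
      have "\<forall>j<d. \<bar>v j\<bar> \<le> R * Cinv"
        using coord_bound[OF cl cp NR'] unfolding d_def Cinv_def by blast
      then have "v \<in> lattice_of d b \<inter> {x. \<forall>j<d. \<bar>x j\<bar> \<le> R * Cinv}"
        using v(1) Lb by blast
      then show "t \<in> \<phi> ` (lattice_of d b \<inter> {x. \<forall>j<d. \<bar>x j\<bar> \<le> R * Cinv})" using tphi by auto
    qed
    have "det_n d b \<noteq> 0" using db by auto
    have fin: "finite (U \<inter> ?T)"
      by (rule finite_subset[OF sub finite_imageI[OF lattice_box_finite[OF \<open>det_n d b \<noteq> 0\<close>]]])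
    define V where "V = U - (U \<inter> ?T - {t0})"
    have "open V" unfolding V_def using Uopen fin by (intro open_Diff finite_imp_closed) auto
    moreover have "V \<inter> ?T = {t0}" using t0 t0U unfolding V_def by auto
    ultimately show "t0 isolated_in ?T" using t0 by (intro isolated_inI) auto
  qed
qed

end
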